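(* Assume the setting in the context, and suppose in addition that $S$ is locally optimal, i.e. $\sum_{a \in A} w_{(A,B)}(a)^2 \le \sum_{b \in B} w(b)^2$ for every $k$-replacement $(A,B)$ for $S$. Let $O \in \mathcal{I}$ and let $Y_e$, $P_x$, $N_x$ be as in the context. Then for every $x \in S$, \[ w(x) \;\ge\; \sum_{e \in P_x} \Bigl(2\, w_{(P_x,N_x)}(e) - \sum_{z \in Y_e} w(z)\Bigr). \]
   Context: Setting. $\mathcal{G}$ is a finite ground set with $|\mathcal{G}| = n$, and $f : 2^{\mathcal{G}} \to \mathbb{R}_{\ge 0}$ is a nonnegative monotone submodular function. $\mathcal{I} \subseteq 2^{\mathcal{G}}$ is a nonempty downward-closed family that is a $k$-exchange system: for all $A, B \in \mathcal{I}$ there is a collection $\{Y_e \subseteq B \setminus A : e \in A \setminus B\}$ such that (K1) $|Y_e| \le k$ for each $e$; (K2) every $x \in B \setminus A$ lies in at most $k$ of the sets $Y_e$; (K3) for every $C \subseteq A \setminus B$, $(B \setminus \bigcup_{e \in C} Y_e) \cup C \in \mathcal{I}$. This collection is extended by setting $Y_e = \{e\}$ for each $e \in A \cap B$. Weights. Fix $\alpha > 0$ and a total order $\prec$ on $\mathcal{G}$. For $S \in \mathcal{I}$ with elements $s_1 \prec \dots \prec s_m$ and $S_i = \{s_1,\dots,s_i\}$, define $w(s_i) = \lfloor (f(S_{i-1} \cup \{s_i\}) - f(S_{i-1}))/\alpha \rfloor \alpha$. A $k$-replacement for $S$ is a pair $(A,B)$ with $B \subseteq S$, $A \subseteq \mathcal{G}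 \setminus (S \setminus B)$, $|A| \le k$, $|B| \le k^2 - k + 1$, and $(S \setminus B) \cup A \in \mathcal{I}$. For such a pair, write $A = \{a_1 \prec \dots \prec a_r\}$, $A_i = \{a_1,\dots,a_i\}$, and define $w_{(A,B)}(a_i) = \lfloor (f((S\setminus B) \cup A_{i-1} \cup \{a_i\}) - f((S\setminus B)\cup A_{i-1}))/\alpha \rfloor \alpha$. Sets $P_x, N_x$. Given $S, O \in \mathcal{I}$, take the neighborhoods $\{Y_e\}_{e \in O}$ given by the $k$-exchange property applied with $A = O$, $B = S$ (extended by $Y_e = \{e\}$ for $e \in O \cap S$). For each $e \in O$ with $Y_e \ne \emptyset$, choose $x_e \in Y_e$ of maximum weight $w$ (ties broken arbitrarily). For $x \in S$, let $P_x = \{e \in O : x_e = x\}$ and $N_x = \bigcup_{e \in P_x} Y_e$. *)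

theory Defs
  imports Complex_Main
begin

definition nonneg_monotone_submodular :: "'a set \<Rightarrow> ('a set \<Rightarrow> real) \<Rightarrow> bool" where
  "nonneg_monotone_submodular G f \<longleftrightarrow>
     (\<forall>A. A \<subseteq> G \<longrightarrow> 0 \<le> f A) \<and>
     (\<forall>A B. A \<subseteq> B \<and> B \<subseteq> G \<longrightarrow> f A \<le> f B) \<and>
     (\<forall>A B. A \<subseteq> G \<and> B \<subseteq> G \<longrightarrow> f (A \<union> B) + f (A \<inter> B) \<le> f A + f B)"

text \<open>The exchange neighbourhoods Y for the pair (A,B): properties (K1)-(K3).\<close>
definition exchange_nbhd :: "nat \<Rightarrow> 'a set set \<Rightarrow> 'a set \<Rightarrow> 'a set \<Rightarrow> ('a \<Rightarrow> 'a set) \<Rightarrow> bool" where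
  "exchange_nbhd k I A B Y \<longleftrightarrow>
     (\<forall>e \<in> A - B. Y e \<subseteq> B - A \<and> card (Y e) \<le> k) \<and>
     (\<forall>x \<in> B - A. card {e \<in> A - B. x \<in> Y e} \<le> k) \<and>
     (\<forall>C. C \<subseteq> A - B \<longrightarrow> (B - (\<Union>e\<in>C. Y e)) \<union> C \<in> I)"

definition k_exchange_system :: "nat \<Rightarrow> 'a set \<Rightarrow> 'a set set \<Rightarrow> bool" where
  "k_exchange_system k G I \<longleftrightarrow>
     I \<subseteq> Pow G \<and> I \<noteq> {} \<and> (\<forall>A \<in> I. \<forall>B. B \<subseteq> A \<longrightarrow> B \<in> I) \<and>
     (\<forall>A \<in> I. \<forall>B \<in> I. \<exists>Y. exchange_nbhd k I A B Y)"

text \<open>Weight w(x) of x in S: rounded-down marginal gain w.r.t. the elements of S preceding x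
  in the strict order r ((y,x) \<in> r means y precedes x).\<close>
definition wt :: "('a set \<Rightarrow> real) \<Rightarrow> real \<Rightarrow> 'a rel \<Rightarrow> 'a set \<Rightarrow> 'a \<Rightarrow> real" where
  "wt f \<alpha> r S x =
     of_int \<lfloor>(f (insert x {y \<in> S. (y, x) \<in> r}) - f {y \<in> S. (y, x) \<in> r}) / \<alpha>\<rfloor> * \<alpha>"

definition repl_wt :: "('a set \<Rightarrow> real) \<Rightarrow> real \<Rightarrow> 'a rel \<Rightarrow> 'a set \<Rightarrow> 'a set \<Rightarrow> 'a set \<Rightarrow> 'a \<Rightarrow> real" where
  "repl_wt f \<alpha> r S A B a =
     of_int \<lfloor>(f (insert a ((S - B) \<union> {y \<in> A. (y, a) \<in> r}))
               - f ((S - B) \<union> {y \<in> A. (y, a) \<in> r})) / \<alpha>\<rfloor> * \<alpha>"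

definition k_replacement :: "nat \<Rightarrow> 'a set \<Rightarrow> 'a set set \<Rightarrow> 'a set \<Rightarrow> 'a set \<Rightarrow> 'a set \<Rightarrow> bool" where
  "k_replacement k G I S A B \<longleftrightarrow>
     B \<subseteq> S \<and> A \<subseteq> G - (S - B) \<and> card A \<le> k \<and> card B \<le> k^2 - k + 1 \<and> (S - B) \<union> A \<in> I"

definition locally_optimal :: "nat \<Rightarrow> 'a set \<Rightarrow> 'a set set \<Rightarrow> ('a set \<Rightarrow> real) \<Rightarrow> real \<Rightarrow> 'a rel \<Rightarrow> 'a set \<Rightarrow> bool" where
  "locally_optimal k G I f \<alpha> r S \<longleftrightarrow>
     (\<forall>A B. k_replacement k G I S A B \<longrightarrow>
        (\<Sum>a\<in>A. (repl_wt f \<alpha> r S A B a)^2) \<le> (\<Sum>b\<in>B. (wt f \<alpha> r S b)^2))"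

end

theory Submission
  imports Defs
begin

lemma sum_UN_le_nonneg:
  fixes g :: "'b \<Rightarrow> real"
  assumes "finite A" "\<And>i. i \<in> A \<Longrightarrow> finite (F i)"
    and "\<And>z. z \<in> (\<Union>i\<in>A. F i) \<Longrightarrow> 0 \<le> g z"
  shows "sum g (\<Union>i\<in>A. F i) \<le> (\<Sum>i\<in>A. sum g (F i))"
  using assms
proof (induction A rule: finite_induct)
  case empty then show ?case by simp
next
  case (insert a A)
  have fU: "finite (\<Union>i\<in>A. F i)" using insert by auto
  have fa: "finite (F a)" using insert by auto
  have "sum g (\<Union>i\<in>insert a A. F i) = sum g (F a \<union> (\<Union>i\<in>A. F i))" by simp
  also have "\<dots> = sum g (F a) + sum g (\<Union>i\<in>A. F i) - sum g (F a \<inter> (\<Union>i\<in>A. F i))"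
    using sum_Un[OF fa fU] .
  also have "\<dots> \<le> sum g (F a) + sum g (\<Union>i\<in>A. F i)"
  proof -
    have "0 \<le> sum g (F a \<inter> (\<Union>i\<in>A. F i))"
      by (rule sum_nonneg) (use insert.prems(2) in auto)
    then show ?thesis by simp
  qed
  also have "\<dots> \<le> sum g (F a) + (\<Sum>i\<in>A. sum g (F i))"
    using insert by auto
  finally show ?case using insert by simp
qed

theorem mainTheorem3:
  fixes G :: "'a set" and f :: "'a set \<Rightarrow> real" and I :: "'a set set"
    and k :: nat and \<alpha> :: real and r :: "'a rel"
    and S Opt :: "'a set" and Y :: "'a \<Rightarrow> 'a set" and xe :: "'a \<Rightarrow> 'a"
    and P N :: "'a \<Rightarrow> 'a set" and x :: 'a
  assumes finG: "finite G"
    and f: "nonneg_monotone_submodular G f"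
    and kpos: "k \<ge> 1"
    and kex: "k_exchange_system k G I"
    and alpha: "\<alpha> > 0"
    and ord: "strict_linear_order_on G r"
    and S: "S \<in> I"
    and opt: "locally_optimal k G I f \<alpha> r S"
    and Opt: "Opt \<in> I"
    and Y: "exchange_nbhd k I Opt S Y"
    and Y_common: "\<forall>e \<in> Opt \<inter> S. Y e = {e}"
    and xe: "\<forall>e \<in> Opt. Y e \<noteq> {} \<longrightarrow>
                xe e \<in> Y e \<and> (\<forall>z \<in> Y e. wt f \<alpha> r S z \<le> wt f \<alpha> r S (xe e))"
    and P_def: "\<forall>y. P y = {e \<in> Opt. Y e \<noteq> {} \<and> xe e = y}"
    and N_def: "\<forall>y. N y = (\<Union>e \<in> P y. Y e)"
    and x: "x \<in> S"
  shows "wt f \<alpha> r S x \<ge>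
           (\<Sum>e \<in> P x. 2 * repl_wt f \<alpha> r S (P x) (N x) e - (\<Sum>z \<in> Y e. wt f \<alpha> r S z))"
proof -
  define w where "w = wt f \<alpha> r S"
  define W where "W = w x"
  define Px where "Px = P x"
  define Nx where "Nx = N x"
  define a where "a = repl_wt f \<alpha> r S Px Nx"
  have IG: "I \<subseteq> Pow G" using kex unfolding k_exchange_system_def by (elim conjE)
  have SG: "S \<subseteq> G" using IG S by auto
  have OG: "Opt \<subseteq> G" using IG Opt by auto
  have finS: "finite S" using SG finG finite_subset by auto
  have finO: "finite Opt" using OG finG finite_subset by auto
  have K1: "\<forall>e \<in> Opt - S. Y e \<subseteq> S - Opt \<and> card (Y e) \<le> k"
    and K2: "\<forall>z \<in> S - Opt. card {e \<in> Opt - S. z \<in> Y e} \<le> k"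
    and K3: "\<forall>C. C \<subseteq> Opt - S \<longrightarrow> (S - (\<Union>e\<in>C. Y e)) \<union> C \<in> I"
    using Y unfolding exchange_nbhd_def by (auto simp only:)
  have YS: "\<And>e. e \<in> Opt \<Longrightarrow> Y e \<subseteq> S"
  proof -
    fix e assume e: "e \<in> Opt"
    show "Y e \<subseteq> S"
    proof (cases "e \<in> S")
      case True then show ?thesis using Y_common e by simp
    next
      case False then show ?thesis using K1 e by blast
    qed
  qed
  have finY: "\<And>e. e \<in> Opt \<Longrightarrow> finite (Y e)" using YS finS finite_subset by blast
  have PxO: "Px \<subseteq> Opt" using P_def Px_def by auto
  have finP: "finite Px" using PxO finO finite_subset by blast
  have Nx_eq: "Nx = (\<Union>e\<in>Px. Y e)" using N_def Nx_def Px_def by auto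
  have NxS: "Nx \<subseteq> S" using Nx_eq PxO YS by blast
  have finN: "finite Nx" using NxS finS finite_subset by blast
  have xY: "\<And>e. e \<in> Px \<Longrightarrow> x \<in> Y e"
  proof -
    fix e assume "e \<in> Px"
    then have e: "e \<in> Opt" "Y e \<noteq> {}" "xe e = x" using P_def Px_def by auto
    then show "x \<in> Y e" using xe by metis
  qed
  have wnn: "\<And>z. z \<in> S \<Longrightarrow> 0 \<le> w z"
  proof -
    fix z assume z: "z \<in> S"
    define T where "T = {y \<in> S. (y, z) \<in> r}"
    have "insert z T \<subseteq> G" using z SG T_def by auto
    moreover have mono: "\<forall>A B. A \<subseteq> B \<and> B \<subseteq> G \<longrightarrow> f A \<le> f B"
      using f unfolding nonneg_monotone_submodular_def by (auto simp only:)
    ultimately have "f T \<le> f (insert z T)" by (meson subset_insertI)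
    then have "0 \<le> (f (insert z T) - f T) / \<alpha>" using alpha by simp
    then have "0 \<le> \<lfloor>(f (insert z T) - f T) / \<alpha>\<rfloor>" by simp
    then show "0 \<le> w z" unfolding w_def wt_def T_def[symmetric] using alpha by simp
  qed
  have wle: "\<And>z. z \<in> Nx \<Longrightarrow> w z \<le> W"
  proof -
    fix z assume "z \<in> Nx"
    then obtain e where e: "e \<in> Px" "z \<in> Y e" using Nx_eq by blast
    then have e2: "e \<in> Opt" "Y e \<noteq> {}" "xe e = x" using P_def Px_def by auto
    then show "w z \<le> W" using xe e(2) unfolding w_def W_def by metis
  qed
  show ?thesis
  proof (cases "Px = {}")
    case True
    then show ?thesis using wnn x unfolding Px_def w_def by simp
  next
    case False
    then obtain e0 where e0: "e0 \<in> Px" by blast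
    have xN: "x \<in> Nx" using e0 xY Nx_eq by blast
    have kk: "k^2 - k + 1 = k * (k - 1) + 1" using kpos
      by (cases k) (auto simp: power2_eq_square)
    have repl: "k_replacement k G I S Px Nx"
    proof (cases "x \<in> Opt")
      case True
      have "Px \<subseteq> {x}"
      proof
        fix e assume e: "e \<in> Px"
        show "e \<in> {x}"
        proof (cases "e \<in> S")
          case True
          then have "Y e = {e}" using Y_common e PxO by auto
          then show ?thesis using xY[OF e] by simp
        next
          case False
          then have "Y e \<subseteq> S - Opt" using K1 e PxO by auto
          then show ?thesis using xY[OF e] \<open>x \<in> Opt\<close> by auto
        qed
      qed
      then have Px1: "Px = {x}" using e0 by auto
      then have Nx1: "Nx = {x}" using Nx_eq Y_common True x by auto
      have "S - {x} \<union> {x} = S" using x by auto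
      then show ?thesis unfolding k_replacement_def Px1 Nx1 using x S True OG kpos kk by auto
    next
      case False
      have PS: "Px \<subseteq> Opt - S"
      proof
        fix e assume e: "e \<in> Px"
        have "e \<notin> S"
        proof
          assume "e \<in> S"
          then have "Y e = {e}" using Y_common e PxO by auto
          then show False using xY[OF e] False e PxO by auto
        qed
        then show "e \<in> Opt - S" using e PxO by auto
      qed
      have cardP: "card Px \<le> k"
      proof -
        have "Px \<subseteq> {e \<in> Opt - S. x \<in> Y e}" using PS xY by auto
        then have "card Px \<le> card {e \<in> Opt - S. x \<in> Y e}"
          by (rule card_mono[rotated]) (use finO in auto)
        also have "\<dots> \<le> k" using K2 x False by auto
        finally show ?thesis .
      qed
      have cardN: "card Nx \<le> k^2 - k + 1"
      proof -
        have "Nx = insert x (\<Union>e\<in>Px. Y e - {x})" using Nx_eq xN by auto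
        moreover have "finite (\<Union>e\<in>Px. Y e - {x})" using finP finY PxO by blast
        ultimately have "card Nx \<le> Suc (card (\<Union>e\<in>Px. Y e - {x}))"
          by (metis card_insert_if le_SucI order_refl)
        also have "card (\<Union>e\<in>Px. Y e - {x}) \<le> (\<Sum>e\<in>Px. card (Y e - {x}))"
          by (rule card_UN_le[OF finP])
        also have "\<dots> \<le> (\<Sum>e\<in>Px. k - 1)"
        proof (rule sum_mono)
          fix e assume e: "e \<in> Px"
          have "card (Y e - {x}) = card (Y e) - 1" using xY[OF e] finY e PxO by auto
          moreover have "card (Y e) \<le> k" using K1 PS e by auto
          ultimately show "card (Y e - {x}) \<le> k - 1" by simp
        qed
        also have "\<dots> = card Px * (k - 1)" by simp
        also have "\<dots> \<le> k * (k - 1)" using cardP by simp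
        finally show ?thesis using kk by simp
      qed
      have "(S - Nx) \<union> Px \<in> I" using K3 PS Nx_eq by auto
      moreover have "Px \<subseteq> G - (S - Nx)" using PS OG by auto
      ultimately show ?thesis unfolding k_replacement_def using NxS cardP cardN by auto
    qed
    have lo: "(\<Sum>e\<in>Px. (a e)^2) \<le> (\<Sum>z\<in>Nx. (w z)^2)"
      using opt repl unfolding locally_optimal_def a_def w_def by simp
    define s where "s = (\<Sum>z\<in>Nx - {x}. w z)"
    define m where "m = real (card Px)"
    define b where "b = (\<lambda>e. \<Sum>z\<in>Y e. w z)"
    have W0: "0 \<le> W" using wnn x W_def by simp
    have s0: "0 \<le> s" unfolding s_def using wnn NxS by (intro sum_nonneg) auto
    have sq: "(\<Sum>z\<in>Nx. (w z)^2) \<le> W^2 + W * s"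
    proof -
      have "(\<Sum>z\<in>Nx. (w z)^2) = W^2 + (\<Sum>z\<in>Nx - {x}. (w z)^2)"
        using sum.remove[OF finN xN, of "\<lambda>z. (w z)^2"] W_def by simp
      also have "(\<Sum>z\<in>Nx - {x}. (w z)^2) \<le> (\<Sum>z\<in>Nx - {x}. W * w z)"
      proof (rule sum_mono)
        fix z assume z: "z \<in> Nx - {x}"
        have "0 \<le> w z" using wnn NxS z by auto
        moreover have "w z \<le> W" using wle z by auto
        ultimately show "(w z)^2 \<le> W * w z" by (simp add: power2_eq_square mult_right_mono)
      qed
      also have "(\<Sum>z\<in>Nx - {x}. W * w z) = W * s" unfolding s_def by (simp add: sum_distrib_left)
      finally show ?thesis by simp
    qed
    have Bge: "m * W + s \<le> (\<Sum>e\<in>Px. b e)"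
    proof -
      have be: "\<And>e. e \<in> Px \<Longrightarrow> b e = W + (\<Sum>z\<in>Y e - {x}. w z)"
      proof -
        fix e assume e: "e \<in> Px"
        show "b e = W + (\<Sum>z\<in>Y e - {x}. w z)"
          unfolding b_def W_def using sum.remove[OF finY xY[OF e]] e PxO by auto
      qed
      have "(\<Sum>e\<in>Px. b e) = (\<Sum>e\<in>Px. W + (\<Sum>z\<in>Y e - {x}. w z))"
        using be by (rule sum.cong[OF refl])
      also have "\<dots> = m * W + (\<Sum>e\<in>Px. (\<Sum>z\<in>Y e - {x}. w z))"
        unfolding m_def by (simp add: sum.distrib)
      finally have eq: "(\<Sum>e\<in>Px. b e) = m * W + (\<Sum>e\<in>Px. (\<Sum>z\<in>Y e - {x}. w z))" .
      have "Nx - {x} = (\<Union>e\<in>Px. Y e - {x})" using Nx_eq by auto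
      then have "s = sum w (\<Union>e\<in>Px. Y e - {x})" unfolding s_def by simp
      also have "\<dots> \<le> (\<Sum>e\<in>Px. (\<Sum>z\<in>Y e - {x}. w z))"
        by (rule sum_UN_le_nonneg) (use finP finY PxO wnn YS in blast)+
      finally show ?thesis using eq by simp
    qed
    have key: "W * (2 * (\<Sum>e\<in>Px. a e)) \<le> W * (W + (\<Sum>e\<in>Px. b e))"
    proof -
      have "W * (2 * (\<Sum>e\<in>Px. a e)) = (\<Sum>e\<in>Px. 2 * W * a e)"
        unfolding sum_distrib_left[symmetric] by simp
      also have "\<dots> \<le> (\<Sum>e\<in>Px. (a e)^2 + W^2)"
      proof (rule sum_mono)
        fix e
        have "0 \<le> (a e - W)^2" by simp
        then show "2 * W * a e \<le> (a e)^2 + W^2" by (simp add: power2_diff mult.commute mult.left_commute)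
      qed
      also have "\<dots> = (\<Sum>e\<in>Px. (a e)^2) + m * W^2" unfolding m_def by (simp add: sum.distrib)
      also have "\<dots> \<le> W^2 + W * s + m * W^2" using lo sq by simp
      also have "\<dots> = W * (W + (m * W + s))" by (simp add: algebra_simps power2_eq_square)
      also have "\<dots> \<le> W * (W + (\<Sum>e\<in>Px. b e))" using Bge W0 by (simp add: mult_left_mono)
      finally show ?thesis .
    qed
    have goal: "(\<Sum>e\<in>Px. 2 * a e - b e) \<le> W"
    proof (cases "W = 0")
      case False
      then have "W > 0" using W0 by simp
      then have "2 * (\<Sum>e\<in>Px. a e) \<le> W + (\<Sum>e\<in>Px. b e)" using key by simp
      then show ?thesis by (simp add: sum_subtractf sum_distrib_left)
    next
      case True
      have "(\<Sum>e\<in>Px. (a e)^2) \<le> 0" using lo sq True by simp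
      then have "\<forall>e\<in>Px. (a e)^2 = 0"
        using sum_nonneg_eq_0_iff[OF finP, of "\<lambda>e. (a e)^2"]
        by (metis antisym sum_nonneg zero_le_power2)
      then have a0: "\<forall>e\<in>Px. a e = 0" by simp
      have "\<forall>e\<in>Px. 0 \<le> b e" unfolding b_def using wnn YS PxO by (meson subsetD sum_nonneg)
      then have "(\<Sum>e\<in>Px. 2 * a e - b e) \<le> 0" using a0 by (intro sum_nonpos) auto
      then show ?thesis using True by simp
    qed
    then show ?thesis unfolding a_def b_def W_def w_def Px_def Nx_def by simp
  qed
qed

end
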